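(* Let $\mathcal{L}$ be a Prob-solvable loop with guard polynomial $G$, let $I$ be a pure invariant of $\mathcal{L}$, and let $M$ be a polynomial expression over the program variables of $\mathcal{L}$. Suppose there exist $i_0\in\mathbb{N}$, $c>0$ and $\epsilon$ such that $\mathbb{P}(M_{i_0}<0)>0$ and for all $i\ge i_0$, almost surely: (1) $\neg\mathit{Guard}_i\wedge I_i\implies M_i\ge 0$; (2) $\mathit{Guard}_i\wedge I_i\implies \mathbb{E}(M_{i+1}-M_i\mid\mathcal{F}_i)\le -\epsilon$; (3) $|M_{i+1}-M_i|<c$. If $\epsilon>0$, then $\mathcal{L}$ is not AST. If $\epsilon\ge 0$, then $\mathcal{L}$ is not PAST.
   Context: A Prob-solvable loop $\mathcal{L}$ with real-valued variables $x_{(1)},\dots,x_{(m)}$ is a program consisting of: an initialization $x_{(1)}:=r_{(1)},\dots,x_{(m)}:=r_{(m)}$ with $r_{(j)}\in\mathbb{R}$; a guard $P>Q$ with $P,Q\in\mathbb{R}[x_{(1)},\dots,x_{(m)}]$; and a loop body which is the sequence, for $j=1,\dots,m$ in this order, of probabilistic updates $x_{(j)} := a_{(j1)}x_{(j)}+P_{(j1)}\ [p_{j1}]\ \cdots [p_{j(l_j-1)}]\ a_{(jl_j)}x_{(j)}+P_{(jl_j)}$, meaning the $k$-th alternative is executed with probability $p_{jk}$ for $k<l_j$ and the last with probability $1-\sum_{k<l_j}p_{jk}$ (choices independent), where $a_{(jk)}\ge0$ are constants, $P_{(jk)}\in\mathbb{R}[x_{(1)},\dots,x_{(j-1)}]$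 (evaluated at the already-updated values), $p_{jk}\in[0,1]$, $\sum_k p_{jk}<1$. The guard polynomial is $G:=P-Q$. A state is a vector in $\mathbb{R}^m$; a run is an infinite sequence of states. The loop space is the filtered probability space $(\Omega,\Sigma,(\mathcal{F}_i)_{i\in\mathbb{N}},\mathbb{P})$ with $\Omega=(\mathbb{R}^m)^\omega$, $\Sigma$ generated by cylinder sets of finite prefixes, $\mathcal{F}_i$ generated by cylinder sets of prefixes of length $i+1$, and $\mathbb{P}$ the measure under which the first state is the initialization state and each next state is obtained from the current state $s$ by executing the loop body once if $G(s)>0$, and equals $s$ otherwise. For an expression $E$, $E_i(\vartheta):=E(\vartheta_i)$; for a formula $B$, $B_i$ is $B$ evaluated at the $i$-th state; $\mathit{Guard}_i$ is the event $G_i>0$. The looping time is $T(\vartheta):=\inf\{i: \vartheta_i\not\models P>Q\}$; $\mathcal{L}$ is AST if $\mathbb{P}(T<\infty)=1$ and PAST if $\mathbb{E}(T)<\infty$. A pure invariant is a formula $I$ over the program variables such that $I_i$ holds almost surely for all $i$. *)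

theory Defs
  imports "HOL-Probability.Probability"
begin

text \<open>Elements of R[x_0,...,x_(m-1)] are represented by polynomial expressions; variable j is
  the (j+1)-th program variable.  A state is a function nat => real (only coordinates < m matter).\<close>

datatype mpoly = Var nat | Const real | Add mpoly mpoly | Mul mpoly mpoly

primrec peval :: "mpoly \<Rightarrow> (nat \<Rightarrow> real) \<Rightarrow> real" where
  "peval (Var j) s = s j"
| "peval (Const r) s = r"
| "peval (Add p q) s = peval p s + peval q s"
| "peval (Mul p q) s = peval p s * peval q s"

primrec pvars :: "mpoly \<Rightarrow> nat set" where
  "pvars (Var j) = {j}"
| "pvars (Const r) = {}"
| "pvars (Add p q) = pvars p \<union> pvars q"
| "pvars (Mul p q) = pvars p \<union> pvars q"

definition psub :: "mpoly \<Rightarrow> mpoly \<Rightarrow> mpoly" where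
  "psub p q = Add p (Mul (Const (-1)) q)"

text \<open>For variable j (0-based), branches L j is the list of alternatives (a_jk, P_jk),
  k = 1..l_j, and probs L j the list of probabilities p_j1..p_j(l_j-1); the last
  alternative has probability 1 - sum of these.\<close>

record ploop =
  nvars :: nat
  init :: "nat \<Rightarrow> real"
  guardP :: mpoly
  guardQ :: mpoly
  branches :: "nat \<Rightarrow> (real \<times> mpoly) list"
  probs :: "nat \<Rightarrow> real list"

definition prob_solvable :: "ploop \<Rightarrow> bool" where
  "prob_solvable L \<longleftrightarrow>
     pvars (guardP L) \<subseteq> {..<nvars L} \<and> pvars (guardQ L) \<subseteq> {..<nvars L} \<and>
     (\<forall>j < nvars L.
        branches L j \<noteq> [] \<and>
        length (probs L j) = length (branches L j) - 1 \<and>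
        (\<forall>p \<in> set (probs L j). 0 \<le> p \<and> p \<le> 1) \<and>
        sum_list (probs L j) < 1 \<and>
        (\<forall>(a, P) \<in> set (branches L j). 0 \<le> a \<and> pvars P \<subseteq> {..<j}))"

definition guard_poly :: "ploop \<Rightarrow> mpoly" where
  "guard_poly L = psub (guardP L) (guardQ L)"

definition branch_pmf :: "ploop \<Rightarrow> nat \<Rightarrow> nat pmf" where
  "branch_pmf L j = embed_pmf (\<lambda>k.
     if k < length (probs L j) then probs L j ! k
     else if k = length (probs L j) then 1 - sum_list (probs L j) else 0)"

text \<open>One execution of the loop body, given the chosen alternative c j for every variable j;
  the variables are updated in order j = 0, ..., m-1, using the already updated values.\<close>
definition body :: "ploop \<Rightarrow> (nat \<Rightarrow> nat) \<Rightarrow> (nat \<Rightarrow> real) \<Rightarrow> (nat \<Rightarrow> real)" where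
  "body L c s0 = fold (\<lambda>j s. s(j := fst (branches L j ! c j) * s j
                                      + peval (snd (branches L j ! c j)) s))
                      [0..<nvars L] s0"

definition guard_holds :: "ploop \<Rightarrow> (nat \<Rightarrow> real) \<Rightarrow> bool" where
  "guard_holds L s \<longleftrightarrow> peval (guard_poly L) s > 0"

text \<open>Independent choices: omega (i, j) is the alternative chosen for variable j in iteration i.\<close>
definition choice_space :: "ploop \<Rightarrow> (nat \<times> nat \<Rightarrow> nat) measure" where
  "choice_space L = PiM UNIV (\<lambda>ij. measure_pmf (branch_pmf L (snd ij)))"

primrec run_of :: "ploop \<Rightarrow> (nat \<times> nat \<Rightarrow> nat) \<Rightarrow> nat \<Rightarrow> (nat \<Rightarrow> real)" where
  "run_of L \<omega> 0 = init L"
| "run_of L \<omega> (Suc i) =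
     (if guard_holds L (run_of L \<omega> i) then body L (\<lambda>j. \<omega> (i, j)) (run_of L \<omega> i)
      else run_of L \<omega> i)"

definition state_space :: "(nat \<Rightarrow> real) measure" where
  "state_space = PiM UNIV (\<lambda>_. borel)"

definition run_space :: "(nat \<Rightarrow> nat \<Rightarrow> real) measure" where
  "run_space = PiM UNIV (\<lambda>_. state_space)"

definition loop_space :: "ploop \<Rightarrow> (nat \<Rightarrow> nat \<Rightarrow> real) measure" where
  "loop_space L = distr (choice_space L) run_space (run_of L)"

definition loop_filtration :: "ploop \<Rightarrow> nat \<Rightarrow> (nat \<Rightarrow> nat \<Rightarrow> real) measure" where
  "loop_filtration L i = sigma (space (loop_space L))
     {{\<theta> \<in> space (loop_space L). \<forall>k\<le>i. \<theta> k \<in> A k} | A. \<forall>k\<le>i. A k \<in> sets state_space}"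

definition pure_invariant :: "ploop \<Rightarrow> ((nat \<Rightarrow> real) \<Rightarrow> bool) \<Rightarrow> bool" where
  "pure_invariant L I \<longleftrightarrow> (\<forall>i. AE \<theta> in loop_space L. I (\<theta> i))"

definition looping_time :: "ploop \<Rightarrow> (nat \<Rightarrow> nat \<Rightarrow> real) \<Rightarrow> enat" where
  "looping_time L \<theta> = (if \<exists>i. \<not> guard_holds L (\<theta> i)
       then enat (LEAST i. \<not> guard_holds L (\<theta> i)) else \<infinity>)"

definition AST :: "ploop \<Rightarrow> bool" where
  "AST L \<longleftrightarrow> measure (loop_space L) {\<theta> \<in> space (loop_space L). looping_time L \<theta> < \<infinity>} = 1"

definition PAST :: "ploop \<Rightarrow> bool" where
  "PAST L \<longleftrightarrow> (\<integral>\<^sup>+ \<theta>. ennreal_of_enat (looping_time L \<theta>) \<partial>loop_space L) < \<infinity>"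

end

theory Submission
  imports Defs
begin
lemma peval_meas:
  assumes "\<And>k. (\<lambda>\<omega>. s \<omega> k) \<in> borel_measurable N"
  shows "(\<lambda>\<omega>. peval P (s \<omega>)) \<in> borel_measurable N"
  using assms by (induction P) auto

lemma fold_upd_meas:
  assumes "\<And>k. (\<lambda>\<omega>. s \<omega> k) \<in> borel_measurable N"
    and "\<And>j. (\<lambda>\<omega>. c \<omega> j) \<in> measurable N (count_space UNIV)"
  shows "(\<lambda>\<omega>. fold (\<lambda>j s. s(j := fst (branches L j ! c \<omega> j) * s j
                                      + peval (snd (branches L j ! c \<omega> j)) s)) js (s \<omega>) k)
          \<in> borel_measurable N"
  using assms(1)
proof (induction js arbitrary: s)
  case Nil
  then show ?case by simp
next
  case (Cons j js)
  have "(\<lambda>\<omega>. ((s \<omega>)(j := fst (branches L j ! c \<omega> j) * s \<omega> j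
                                      + peval (snd (branches L j ! c \<omega> j)) (s \<omega>))) k') \<in> borel_measurable N" for k'
  proof (cases "k' = j")
    case True
    have m: "(\<lambda>\<omega>. (\<lambda>n \<omega>. fst (branches L j ! n) * s \<omega> j + peval (snd (branches L j ! n)) (s \<omega>)) (c \<omega> j) \<omega>) \<in> borel_measurable N"
      by (rule measurable_compose_countable[OF _ assms(2)], rule borel_measurable_add,
          rule borel_measurable_times, rule borel_measurable_const, rule Cons.prems,
          rule peval_meas, rule Cons.prems)
    show ?thesis using True m by simp
  next
    case False
    then show ?thesis using Cons.prems by simp
  qed
  from Cons.IH[OF this] show ?case by (simp del: fun_upd_apply)
qed

lemma run_of_coord_meas:
  "(\<lambda>\<omega>. run_of L \<omega> i k) \<in> borel_measurable (choice_space L)"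
proof (induction i arbitrary: k)
  case 0
  then show ?case by simp
next
  case (Suc i)
  have c: "(\<lambda>\<omega>. \<omega> (i, j)) \<in> measurable (choice_space L) (count_space UNIV)" for j
    unfolding choice_space_def
    by (rule measurable_compose[OF measurable_component_singleton[of "(i,j)" UNIV]]) auto
  have g: "{\<omega> \<in> space (choice_space L). guard_holds L (run_of L \<omega> i)} \<in> sets (choice_space L)"
    unfolding guard_holds_def by (rule borel_measurable_less[OF borel_measurable_const peval_meas[OF Suc]])
  have b: "(\<lambda>\<omega>. body L (\<lambda>j. \<omega> (i, j)) (run_of L \<omega> i) k) \<in> borel_measurable (choice_space L)"
    unfolding body_def by (rule fold_upd_meas[OF Suc c])
  have e: "(\<lambda>\<omega>. run_of L \<omega> (Suc i) k) = (\<lambda>\<omega>. if guard_holds L (run_of L \<omega> i) then body L (\<lambda>j. \<omega> (i, j)) (run_of L \<omega> i) k else run_of L \<omega> i k)"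
    by auto
  show ?case unfolding e by (rule measurable_If[OF b Suc g])
qed

lemma run_of_meas: "run_of L \<in> measurable (choice_space L) run_space"
  unfolding run_space_def state_space_def
  by (rule measurable_PiM_single', rule measurable_PiM_single', rule run_of_coord_meas) (auto simp: space_PiM)

lemma exp_le_quad:
  fixes y :: real assumes "\<bar>y\<bar> \<le> 1" shows "exp y \<le> 1 + y + y\<^sup>2"
proof (cases "y \<ge> 0")
  case True then show ?thesis using exp_bound[of y] assms by auto
next
  case False
  have "1 - y \<le> exp (-y)" using exp_ge_add_one_self[of "-y"] by simp
  hence "exp y * (1 - y) \<le> 1"
    by (metis exp_minus exp_gt_zero mult.commute pos_le_divide_eq divide_inverse mult_1)
  moreover have "1 \<le> (1 - y) * (1 + y + y\<^sup>2)"
  proof -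
    have "(1 - y) * (1 + y + y\<^sup>2) = 1 - y^3" by (simp add: algebra_simps power2_eq_square power3_eq_cube)
    moreover have "y^3 \<le> 0" using False mult_nonneg_nonpos[of "y*y" y] by (simp add: power3_eq_cube)
    ultimately show ?thesis by simp
  qed
  ultimately have "exp y * (1 - y) \<le> (1 + y + y\<^sup>2) * (1 - y)" by (simp add: mult.commute)
  moreover have "1 - y > 0" using False by simp
  ultimately show ?thesis by simp
qed

locale absloop = prob_space P for P :: "'a measure" +
  fixes F :: "nat \<Rightarrow> 'a measure" and X :: "nat \<Rightarrow> 'a \<Rightarrow> real" and G :: "nat \<Rightarrow> 'a set"
    and i0 :: nat and c \<epsilon> :: real
  assumes subalg: "\<And>i. subalgebra P (F i)"
    and Fmono: "\<And>i j. i \<le> j \<Longrightarrow> sets (F i) \<subseteq> sets (F j)"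
    and Xm: "\<And>i. X i \<in> borel_measurable (F i)"
    and Gm: "\<And>i. G i \<in> sets (F i)"
    and frz: "\<And>i. AE x in P. x \<notin> G i \<longrightarrow> X (Suc i) x = X i x"
    and c1: "\<And>i. i \<ge> i0 \<Longrightarrow> AE x in P. x \<notin> G i \<longrightarrow> X i x \<ge> 0"
    and c2: "\<And>i. i \<ge> i0 \<Longrightarrow> AE x in P. x \<in> G i \<longrightarrow>
               real_cond_exp P (F i) (\<lambda>x. X (Suc i) x - X i x) x \<le> - \<epsilon>"
    and c3: "\<And>i. i \<ge> i0 \<Longrightarrow> AE x in P. \<bar>X (Suc i) x - X i x\<bar> < c"
    and c_pos: "c > 0"
begin

lemma XmP[measurable]: "X i \<in> borel_measurable P"
  using measurable_from_subalg[OF subalg Xm] .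

lemma GmP[measurable]: "G i \<in> sets P"
  using subalg[of i] Gm[of i] unfolding subalgebra_def by auto

lemma bint: "(f :: 'a \<Rightarrow> real) \<in> borel_measurable P \<Longrightarrow> AE x in P. \<bar>f x\<bar> \<le> B \<Longrightarrow> integrable P f"
  by (rule integrable_const_bound[where B=B]) (simp_all add: real_norm_def)

lemma drift:
  assumes i: "i \<ge> i0" and hm: "h \<in> borel_measurable (F i)"
    and hb: "AE x in P. 0 \<le> h x \<and> h x \<le> B"
  shows "(\<integral>x. h x * indicator (G i) x * (X (Suc i) x - X i x) \<partial>P)
          \<le> - \<epsilon> * (\<integral>x. h x * indicator (G i) x \<partial>P)"
proof -
  interpret S: sigma_finite_subalgebra P "F i"
    by (rule finite_measure_subalgebra_is_sigma_finite) (unfold_locales, rule subalg)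
  define D where "D = (\<lambda>x. X (Suc i) x - X i x)"
  define f where "f = (\<lambda>x. h x * indicator (G i) x)"
  have Dm[measurable]: "D \<in> borel_measurable P" unfolding D_def by measurable
  have Gi[measurable]: "G i \<in> sets (F i)" by (rule Gm)
  have fm[measurable]: "f \<in> borel_measurable (F i)" unfolding f_def using hm by measurable
  have fmP[measurable]: "f \<in> borel_measurable P" using measurable_from_subalg[OF subalg fm] .
  have fb: "AE x in P. 0 \<le> f x \<and> f x \<le> B"
    using hb by eventually_elim (auto simp: f_def indicator_def)
  have int1: "integrable P (\<lambda>x. f x * D x)"
  proof (rule bint[where B = "B * c"])
    show "AE x in P. \<bar>f x * D x\<bar> \<le> B * c"
      using fb c3[OF i] proof eventually_elim
      case (elim x)
      have "\<bar>f x * D x\<bar> = \<bar>f x\<bar> * \<bar>D x\<bar>" by (simp add: abs_mult)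
      also have "\<dots> \<le> B * c"
        using elim(1) elim(2) by (intro mult_mono) (auto simp: D_def)
      finally show ?case .
    qed
  qed measurable
  have intf: "integrable P f"
  proof (rule bint[where B = B])
    show "AE x in P. \<bar>f x\<bar> \<le> B" using fb by eventually_elim auto
  qed measurable
  have e: "(\<integral>x. f x * real_cond_exp P (F i) D x \<partial>P) = (\<integral>x. f x * D x \<partial>P)"
    and int2: "integrable P (\<lambda>x. f x * real_cond_exp P (F i) D x)"
    using S.real_cond_exp_intg[OF int1 fm Dm] by auto
  have "(\<integral>x. f x * real_cond_exp P (F i) D x \<partial>P) \<le> (\<integral>x. f x * (- \<epsilon>) \<partial>P)"
  proof (rule integral_mono_AE[OF int2])
    show "integrable P (\<lambda>x. f x * - \<epsilon>)" using intf by auto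
    show "AE x in P. f x * real_cond_exp P (F i) D x \<le> f x * - \<epsilon>"
      using fb c2[OF i] proof eventually_elim
      case (elim x)
      show ?case
      proof (cases "x \<in> G i")
        case True then show ?thesis using elim mult_left_mono[of "real_cond_exp P (F i) D x" "-\<epsilon>" "f x"] by (auto simp: D_def)
      next
        case False then show ?thesis by (simp add: f_def)
      qed
    qed
  qed
  also have "(\<integral>x. f x * (- \<epsilon>) \<partial>P) = - \<epsilon> * (\<integral>x. f x \<partial>P)"
  proof -
    have "(\<lambda>x. f x * (- \<epsilon>)) = (\<lambda>x. (- \<epsilon>) * f x)" by (rule ext) (rule mult.commute)
    then show ?thesis using integral_mult_right_zero[of P "- \<epsilon>" f] by simp
  qed
  finally have r: "(\<integral>x. f x * D x \<partial>P) \<le> - \<epsilon> * (\<integral>x. f x \<partial>P)" using e by simp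
  show ?thesis using r unfolding f_def D_def .
qed

lemma incr_bound:
  assumes "n \<ge> i0" shows "AE x in P. \<bar>X n x - X i0 x\<bar> \<le> c * real (n - i0)"
  using assms
proof (induction n rule: nat_induct_at_least)
  case base then show ?case by simp
next
  case (Suc n)
  show ?case using Suc.IH c3[OF Suc.hyps] proof eventually_elim
    case (elim x)
    have "\<bar>X (Suc n) x - X i0 x\<bar> \<le> \<bar>X (Suc n) x - X n x\<bar> + \<bar>X n x - X i0 x\<bar>"
      using abs_triangle_ineq[of "X (Suc n) x - X n x" "X n x - X i0 x"] by simp
    also have "\<dots> \<le> c + c * real (n - i0)" using elim by linarith
    also have "\<dots> = c * real (Suc n - i0)" using Suc.hyps by (simp add: Suc_diff_le distrib_left)
    finally show ?case .
  qed
qed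

end

context absloop begin

lemma Fsub: "i \<le> j \<Longrightarrow> A \<in> sets (F i) \<Longrightarrow> A \<in> sets (F j)"
  using Fmono by blast

lemma FsubP: "A \<in> sets (F i) \<Longrightarrow> A \<in> sets P"
  using subalg[of i] unfolding subalgebra_def by auto

lemma lin_mono:
  assumes eps: "\<epsilon> \<ge> 0" and A: "A \<in> sets (F i0)" and K: "K \<ge> 0"
    and Ab: "AE x in P. x \<in> A \<longrightarrow> \<bar>X i0 x\<bar> \<le> K" and n: "n \<ge> i0"
  shows "(\<integral>x. indicator A x * X n x \<partial>P) \<le> (\<integral>x. indicator A x * X i0 x \<partial>P)"
  using n
proof (induction n rule: nat_induct_at_least)
  case base then show ?case by simp
next
  case (Suc n)
  have AF[measurable]: "A \<in> sets (F n)" using Fsub[OF Suc.hyps A] .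
  have AP[measurable]: "A \<in> sets P" using FsubP[OF A] .
  have intk: "integrable P (\<lambda>x. indicator A x * X k x)" if k: "k \<ge> i0" for k
  proof (rule bint[where B = "K + c * real (k - i0)"])
    show "AE x in P. \<bar>indicator A x * X k x\<bar> \<le> K + c * real (k - i0)"
      using Ab incr_bound[OF k] proof eventually_elim
      case (elim x)
      show ?case
      proof (cases "x \<in> A")
        case True
        then show ?thesis using elim by (simp add: indicator_def)
      next
        case False
        then show ?thesis using K c_pos by (simp add: indicator_def)
      qed
    qed
  qed measurable
  define D where "D = (\<lambda>x. X (Suc n) x - X n x)"
  have intD: "integrable P (\<lambda>x. indicator A x * indicator (G n) x * D x)"
  proof (rule bint[where B = c])
    show "AE x in P. \<bar>indicator A x * indicator (G n) x * D x\<bar> \<le> c"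
      using c3[OF Suc.hyps] by eventually_elim (auto simp: indicator_def D_def c_pos less_imp_le)
  qed (unfold D_def, measurable)
  have eq: "AE x in P. indicator A x * X (Suc n) x = indicator A x * X n x + indicator A x * indicator (G n) x * D x"
    using frz[of n] by eventually_elim (auto simp: indicator_def D_def)
  have "(\<integral>x. indicator A x * X (Suc n) x \<partial>P) = (\<integral>x. indicator A x * X n x + indicator A x * indicator (G n) x * D x \<partial>P)"
    by (rule integral_cong_AE) (use eq in \<open>auto simp: D_def\<close>)
  also have "\<dots> = (\<integral>x. indicator A x * X n x \<partial>P) + (\<integral>x. indicator A x * indicator (G n) x * D x \<partial>P)"
    by (rule Bochner_Integration.integral_add[OF intk[OF Suc.hyps] intD])
  also have "(\<integral>x. indicator A x * indicator (G n) x * D x \<partial>P) \<le> - \<epsilon> * (\<integral>x. indicator A x * indicator (G n) x \<partial>P)"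
    unfolding D_def by (rule drift[OF Suc.hyps, where B = 1]) (auto simp: indicator_def)
  also have "\<dots> \<le> 0"
    using eps by (simp add: mult_nonneg_nonneg integral_nonneg)
  finally show ?case using Suc.IH by simp
qed

end

context absloop begin

lemma exp_mono:
  assumes A: "A \<in> sets (F i0)" and Ab: "AE x in P. x \<in> A \<longrightarrow> X i0 x \<le> 0" and n: "n \<ge> i0"
    and l: "l > 0" "l * c \<le> 1" "l * c\<^sup>2 \<le> \<epsilon>"
  shows "(\<integral>x. indicator A x * exp (l * X n x) \<partial>P) \<le> (\<integral>x. indicator A x * exp (l * X i0 x) \<partial>P)"
  using n
proof (induction n rule: nat_induct_at_least)
  case base then show ?case by simp
next
  case (Suc n)
  have AF[measurable]: "A \<in> sets (F n)" using Fsub[OF Suc.hyps A] .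
  have AP[measurable]: "A \<in> sets P" using FsubP[OF A] .
  have hbk: "AE x in P. 0 \<le> indicator A x * exp (l * X k x) \<and>
        indicator A x * exp (l * X k x) \<le> exp (l * (c * real (k - i0)))" if k: "k \<ge> i0" for k
    using Ab incr_bound[OF k] proof eventually_elim
    case (elim x)
    show ?case
    proof (cases "x \<in> A")
      case True
      then have "X k x \<le> c * real (k - i0)" using elim by linarith
      then have "l * X k x \<le> l * (c * real (k - i0))" using l(1) by (intro mult_left_mono) auto
      then show ?thesis using True by (simp add: indicator_def)
    next
      case False
      then show ?thesis by (simp add: indicator_def)
    qed
  qed
  have intk: "integrable P (\<lambda>x. indicator A x * exp (l * X k x))" if k: "k \<ge> i0" for k
  proof (rule bint[where B = "exp (l * (c * real (k - i0)))"])
    show "AE x in P. \<bar>indicator A x * exp (l * X k x)\<bar> \<le> exp (l * (c * real (k - i0)))"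
      using hbk[OF k] by eventually_elim auto
  qed measurable
  define E where "E = exp (l * (c * real (n - i0)))"
  define D where "D = (\<lambda>x. X (Suc n) x - X n x)"
  define h where "h = (\<lambda>x. indicator A x * exp (l * X n x))"
  have hm[measurable]: "h \<in> borel_measurable (F n)" unfolding h_def using Xm[of n] by measurable
  have hmP[measurable]: "h \<in> borel_measurable P" using measurable_from_subalg[OF subalg hm] .
  have hb: "AE x in P. 0 \<le> h x \<and> h x \<le> E" using hbk[OF Suc.hyps] unfolding h_def E_def .
  have E0: "E \<ge> 0" unfolding E_def by simp
  have intHD: "integrable P (\<lambda>x. h x * indicator (G n) x * D x)"
  proof (rule bint[where B = "E * c"])
    show "AE x in P. \<bar>h x * indicator (G n) x * D x\<bar> \<le> E * c"
      using hb c3[OF Suc.hyps] proof eventually_elim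
      case (elim x)
      have "\<bar>h x * indicator (G n) x * D x\<bar> = \<bar>h x\<bar> * indicator (G n) x * \<bar>D x\<bar>"
        by (simp add: abs_mult indicator_def)
      also have "\<dots> \<le> E * 1 * c"
        using elim by (intro mult_mono) (auto simp: D_def indicator_def less_imp_le)
      finally show ?case by simp
    qed
  qed (unfold D_def, measurable)
  have intHG: "integrable P (\<lambda>x. h x * indicator (G n) x)"
  proof (rule bint[where B = E])
    show "AE x in P. \<bar>h x * indicator (G n) x\<bar> \<le> E"
      using hb by eventually_elim (auto simp: indicator_def E0)
  qed measurable
  have ineq: "AE x in P. indicator A x * exp (l * X (Suc n) x) \<le>
      h x + l * (h x * indicator (G n) x * D x) + (l * c)\<^sup>2 * (h x * indicator (G n) x)"
    using frz[of n] c3[OF Suc.hyps] hb proof eventually_elim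
    case (elim x)
    show ?case
    proof (cases "x \<in> G n")
      case False
      then show ?thesis using elim by (simp add: h_def)
    next
      case True
      have lD: "\<bar>l * D x\<bar> \<le> l * c" using elim l(1) by (simp add: abs_mult D_def less_imp_le)
      have "exp (l * D x) \<le> 1 + l * D x + (l * D x)\<^sup>2"
        by (rule exp_le_quad) (use lD l(2) in linarith)
      also have "(l * D x)\<^sup>2 \<le> (l * c)\<^sup>2"
        using lD by (metis abs_ge_zero power2_abs power_mono)
      finally have e1: "exp (l * D x) \<le> 1 + l * D x + (l * c)\<^sup>2" by simp
      have "indicator A x * exp (l * X (Suc n) x) = h x * exp (l * D x)"
        by (simp add: h_def D_def flip: exp_add) (simp add: algebra_simps)
      also have "\<dots> \<le> h x * (1 + l * D x + (l * c)\<^sup>2)"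
        using elim e1 by (intro mult_left_mono) auto
      also have "\<dots> = h x + l * (h x * indicator (G n) x * D x) + (l * c)\<^sup>2 * (h x * indicator (G n) x)"
        using True by (simp add: algebra_simps)
      finally show ?thesis .
    qed
  qed
  have "(\<integral>x. indicator A x * exp (l * X (Suc n) x) \<partial>P) \<le>
      (\<integral>x. h x + l * (h x * indicator (G n) x * D x) + (l * c)\<^sup>2 * (h x * indicator (G n) x) \<partial>P)"
    by (rule integral_mono_AE[OF intk[OF le_SucI[OF Suc.hyps]] _ ineq])
       (use intk[OF Suc.hyps] intHD intHG in \<open>simp add: h_def\<close>)
  also have "\<dots> = (\<integral>x. h x \<partial>P) + l * (\<integral>x. h x * indicator (G n) x * D x \<partial>P)
        + (l * c)\<^sup>2 * (\<integral>x. h x * indicator (G n) x \<partial>P)"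
    using intk[OF Suc.hyps] intHD intHG by (simp add: h_def)
  also have "\<dots> \<le> (\<integral>x. h x \<partial>P) + l * (- \<epsilon> * (\<integral>x. h x * indicator (G n) x \<partial>P))
        + (l * c)\<^sup>2 * (\<integral>x. h x * indicator (G n) x \<partial>P)"
    using mult_left_mono[OF drift[OF Suc.hyps hm hb], of l] l(1) unfolding D_def by simp
  also have "\<dots> \<le> (\<integral>x. h x \<partial>P)"
  proof -
    have I0: "0 \<le> (\<integral>x. h x * indicator (G n) x \<partial>P)"
      by (rule integral_nonneg_AE) (use hb in \<open>eventually_elim, auto simp: indicator_def\<close>)
    have "(l * c)\<^sup>2 = l * (l * c\<^sup>2)" by (simp add: power2_eq_square)
    also have "\<dots> \<le> l * \<epsilon>" using l by simp
    finally have "(l * c)\<^sup>2 - l * \<epsilon> \<le> 0" by simp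
    then have "((l * c)\<^sup>2 - l * \<epsilon>) * (\<integral>x. h x * indicator (G n) x \<partial>P) \<le> 0"
      using I0 by (simp add: mult_nonpos_nonneg)
    then show ?thesis by (simp add: algebra_simps)
  qed
  finally show ?case using Suc.IH unfolding h_def by simp
qed

end

context absloop begin

lemma intind: "A \<in> sets P \<Longrightarrow> integrable P (indicator A :: _ \<Rightarrow> real)"
  by (rule integrable_real_indicator) (auto simp: emeasure_eq_measure)

lemma notAST_abs:
  assumes eps: "\<epsilon> > 0" and pos: "measure P {x \<in> space P. X i0 x < 0} > 0"
  shows "\<exists>\<delta>>0. \<forall>n\<ge>i0. \<delta> \<le> measure P (G n)"
proof -
  define A where "A = {x \<in> space P. X i0 x < 0}"
  have AF[measurable]: "A \<in> sets (F i0)"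
  proof -
    have "{x \<in> space (F i0). X i0 x < 0} \<in> sets (F i0)" using Xm[of i0] by measurable
    moreover have "space (F i0) = space P" using subalg[of i0] unfolding subalgebra_def by simp
    ultimately show ?thesis unfolding A_def by simp
  qed
  have AP[measurable]: "A \<in> sets P" using FsubP[OF AF] .
  define l where "l = min (1 / c) (\<epsilon> / c\<^sup>2)"
  have l0: "l > 0" unfolding l_def using c_pos eps by simp
  have l1: "l * c \<le> 1"
  proof -
    have "l * c \<le> (1 / c) * c" unfolding l_def using c_pos by (intro mult_right_mono) auto
    then show ?thesis using c_pos by simp
  qed
  have l2: "l * c\<^sup>2 \<le> \<epsilon>"
  proof -
    have "l * c\<^sup>2 \<le> (\<epsilon> / c\<^sup>2) * c\<^sup>2" unfolding l_def using c_pos by (intro mult_right_mono) auto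
    then show ?thesis using c_pos by simp
  qed
  have Ab: "AE x in P. x \<in> A \<longrightarrow> X i0 x \<le> 0" by (auto simp: A_def)
  define E0 where "E0 = (\<integral>x. indicator A x * exp (l * X i0 x) \<partial>P)"
  have int0: "integrable P (\<lambda>x. indicator A x * exp (l * X i0 x))"
  proof (rule bint[where B = 1])
    show "AE x in P. \<bar>indicator A x * exp (l * X i0 x)\<bar> \<le> 1"
      using l0 by (intro AE_I2) (auto simp: A_def indicator_def mult_pos_neg less_imp_le)
  qed measurable
  have "E0 < (\<integral>x. indicator A x \<partial>P)"
    unfolding E0_def
  proof (rule integral_less_AE[OF int0 _ _ AP])
    show "integrable P (indicator A :: _ \<Rightarrow> real)" using intind[OF AP] .
    show "emeasure P A \<noteq> 0" using pos unfolding A_def by (auto simp: measure_def)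
    show "AE x in P. x \<in> A \<longrightarrow> indicator A x * exp (l * X i0 x) \<noteq> indicator A x"
      using l0 by (auto simp: A_def indicator_def mult_pos_neg)
    show "AE x in P. indicator A x * exp (l * X i0 x) \<le> indicator A x"
      using l0 by (auto simp: A_def indicator_def mult_pos_neg less_imp_le)
  qed
  then have E0lt: "E0 < measure P A" using AP by simp
  define \<delta> where "\<delta> = measure P A - E0"
  have "\<delta> > 0" using E0lt unfolding \<delta>_def by simp
  moreover have "\<delta> \<le> measure P (G n)" if n: "n \<ge> i0" for n
  proof -
    have intn: "integrable P (\<lambda>x. indicator A x * exp (l * X n x))"
    proof (rule bint[where B = "exp (l * (c * real (n - i0)))"])
      show "AE x in P. \<bar>indicator A x * exp (l * X n x)\<bar> \<le> exp (l * (c * real (n - i0)))"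
        using incr_bound[OF n] proof eventually_elim
        case (elim x)
        show ?case
        proof (cases "x \<in> A")
          case True
          then have "X n x \<le> c * real (n - i0)" using elim by (auto simp: A_def)
          then have "l * X n x \<le> l * (c * real (n - i0))" using l0 by (intro mult_left_mono) auto
          then show ?thesis using True by (simp add: indicator_def)
        qed (simp add: indicator_def)
      qed
    qed measurable
    have "measure P A - measure P (G n) = (\<integral>x. indicator A x - indicator (G n) x \<partial>P)"
      using intind[OF AP] intind[OF GmP[of n]] by (simp add: Bochner_Integration.integral_diff)
    also have "\<dots> \<le> (\<integral>x. indicator A x * exp (l * X n x) \<partial>P)"
    proof (rule integral_mono_AE[OF _ intn])
      show "integrable P (\<lambda>x. indicator A x - indicator (G n) x :: real)"
        using intind[OF AP] intind[OF GmP[of n]] by simp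
      show "AE x in P. indicator A x - indicator (G n) x \<le> indicator A x * exp (l * X n x)"
        using c1[OF n] proof eventually_elim
        case (elim x)
        show ?case
        proof (cases "x \<in> G n")
          case False
          then have "X n x \<ge> 0" using elim by simp
          then have "1 \<le> exp (l * X n x)" using l0 by simp
          then show ?thesis using False by (simp add: indicator_def)
        qed (simp add: indicator_def)
      qed
    qed
    also have "\<dots> \<le> E0" unfolding E0_def by (rule exp_mono[OF AF Ab n l0 l1 l2])
    finally show ?thesis unfolding \<delta>_def by simp
  qed
  ultimately show ?thesis by blast
qed

end

lemma harmonic_bound_not_summable:
  fixes m :: "nat \<Rightarrow> real"
  assumes d: "\<delta> > 0" and C: "C > 0" and m: "\<And>k. \<delta> \<le> C * real (Suc k) * m (k + i0)"
  shows "\<not> summable m"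
proof
  assume "summable m"
  then have "summable (\<lambda>k. m (k + i0))" by (subst summable_iff_shift) 
  then have s: "summable (\<lambda>k. (C / \<delta>) * m (k + i0))" by (rule summable_mult)
  have "summable (\<lambda>k. inverse (real (Suc k)))"
  proof (rule summable_comparison_test'[OF s])
    fix k
    have pos: "C * real (Suc k) > 0" using C by simp
    have m': "\<delta> / (C * real (Suc k)) \<le> m (k + i0)"
      using m[of k] pos by (simp add: divide_le_eq algebra_simps)
    have "inverse (real (Suc k)) = (C / \<delta>) * (\<delta> / (C * real (Suc k)))"
    proof -
      have nz0: "C + C * real k > 0" using C by (simp add: add_pos_nonneg)
      then have nz: "C + C * real k \<noteq> 0" by linarith
      show ?thesis using C d nz by (simp add: field_simps)
    qed
    also have "\<dots> \<le> (C / \<delta>) * m (k + i0)" using m' C d by (intro mult_left_mono) auto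
    finally show "norm (inverse (real (Suc k))) \<le> (C / \<delta>) * m (k + i0)" by simp
  qed
  then have "summable (\<lambda>k. inverse (real k) :: real)"
    using summable_Suc_iff[of "\<lambda>k. inverse (real k) :: real"] by simp
  then show False using not_summable_harmonic by blast
qed

context absloop begin

lemma notPAST_abs:
  assumes eps: "\<epsilon> \<ge> 0" and pos: "measure P {x \<in> space P. X i0 x < 0} > 0"
  shows "\<not> summable (\<lambda>n. measure P (G n))"
proof -
  have spF: "space (F i0) = space P" using subalg[of i0] unfolding subalgebra_def by simp
  define AK where "AK = (\<lambda>K::nat. {x \<in> space P. - real K < X i0 x \<and> X i0 x < 0})"
  have AKF[measurable]: "AK K \<in> sets (F i0)" for K
  proof -
    have "{x \<in> space (F i0). - real K < X i0 x \<and> X i0 x < 0} \<in> sets (F i0)" using Xm[of i0] by measurable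
    then show ?thesis unfolding AK_def spF .
  qed
  have "\<exists>K. measure P (AK K) > 0"
  proof (rule ccontr)
    assume nK: "\<not> (\<exists>K. measure P (AK K) > 0)"
    have z: "measure P (AK K) = 0" for K
    proof -
      have "\<not> 0 < measure P (AK K)" using nK by blast
      then show ?thesis using measure_nonneg[of P "AK K"] by linarith
    qed
    have "AE x in P. x \<notin> AK K" for K
    proof (rule AE_not_in)
      show "AK K \<in> null_sets P" using z[of K] FsubP[OF AKF[of K]]
        by (simp add: null_sets_def emeasure_eq_measure)
    qed
    then have "AE x in P. \<forall>K. x \<notin> AK K" by (subst AE_all_countable) blast
    then have "AE x in P. \<not> X i0 x < 0"
      using AE_space proof eventually_elim
      case (elim x)
      show ?case
      proof
        assume "X i0 x < 0"
        obtain K :: nat where "- X i0 x < real K" using reals_Archimedean2 by blast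
        then have "- real K < X i0 x" by linarith
        then have "x \<in> AK K" using elim(2) \<open>X i0 x < 0\<close> unfolding AK_def by blast
        then show False using elim(1) by blast
      qed
    qed
    then have "emeasure P {x \<in> space P. X i0 x < 0} = 0" by (rule emeasure_eq_0_AE)
    then show False using pos by (simp add: emeasure_eq_measure)
  qed
  then obtain K where mK: "measure P (AK K) > 0" by blast
  define A where "A = AK K"
  define Kb where "Kb = real K + 1"
  have AF[measurable]: "A \<in> sets (F i0)" unfolding A_def by (rule AKF)
  have AP[measurable]: "A \<in> sets P" using FsubP[OF AF] .
  have Kb0: "Kb > 0" unfolding Kb_def by simp
  have Ab: "AE x in P. x \<in> A \<longrightarrow> \<bar>X i0 x\<bar> \<le> Kb" by (auto simp: A_def AK_def Kb_def)
  define E0 where "E0 = (\<integral>x. indicator A x * X i0 x \<partial>P)"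
  have int0: "integrable P (\<lambda>x. indicator A x * X i0 x)"
  proof (rule bint[where B = Kb])
    show "AE x in P. \<bar>indicator A x * X i0 x\<bar> \<le> Kb"
      using Ab by eventually_elim (use Kb0 in \<open>auto simp: indicator_def\<close>)
  qed measurable
  have "E0 < (\<integral>x. 0 \<partial>P)"
    unfolding E0_def
  proof (rule integral_less_AE[OF int0 _ _ AP])
    show "integrable P (\<lambda>x. 0 :: real)" by simp
    show "emeasure P A \<noteq> 0" using mK unfolding A_def by (auto simp: measure_def)
    show "AE x in P. x \<in> A \<longrightarrow> indicator A x * X i0 x \<noteq> 0"
      by (auto simp: A_def AK_def indicator_def)
    show "AE x in P. indicator A x * X i0 x \<le> 0"
      by (intro AE_I2) (auto simp: A_def AK_def indicator_def)
  qed
  then have E0lt: "E0 < 0" by simp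
  define \<delta> where "\<delta> = - E0"
  have d0: "\<delta> > 0" using E0lt unfolding \<delta>_def by simp
  have bnd: "\<delta> \<le> (Kb + c * real (n - i0)) * measure P (G n)" if n: "n \<ge> i0" for n
  proof -
    have intn: "integrable P (\<lambda>x. indicator A x * X n x)"
    proof (rule bint[where B = "Kb + c * real (n - i0)"])
      show "AE x in P. \<bar>indicator A x * X n x\<bar> \<le> Kb + c * real (n - i0)"
        using Ab incr_bound[OF n] proof eventually_elim
        case (elim x)
        show ?case
        proof (cases "x \<in> A")
          case True
          then show ?thesis using elim by (simp add: indicator_def)
        next
          case False
          then show ?thesis using Kb0 c_pos by (simp add: indicator_def)
        qed
      qed
    qed measurable
    have "- (Kb + c * real (n - i0)) * measure P (G n) = (\<integral>x. - (Kb + c * real (n - i0)) * indicator (G n) x \<partial>P)"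
      by simp
    also have "\<dots> \<le> (\<integral>x. indicator A x * X n x \<partial>P)"
    proof (rule integral_mono_AE[OF _ intn])
      show "integrable P (\<lambda>x. - (Kb + c * real (n - i0)) * indicator (G n) x :: real)"
        using intind[OF GmP[of n]] by simp
      show "AE x in P. - (Kb + c * real (n - i0)) * indicator (G n) x \<le> indicator A x * X n x"
        using c1[OF n] incr_bound[OF n] Ab proof eventually_elim
        case (elim x)
        have KC: "Kb + c * real (n - i0) \<ge> 0" using Kb0 c_pos by simp
        show ?case
        proof (cases "x \<in> A")
          case True
          show ?thesis
          proof (cases "x \<in> G n")
            case True
            then show ?thesis using elim \<open>x \<in> A\<close> by (simp add: indicator_def)
          next
            case False
            then show ?thesis using elim \<open>x \<in> A\<close> by (simp add: indicator_def)
          qed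
        next
          case False
          then show ?thesis using KC by (simp add: indicator_def)
        qed
      qed
    qed
    also have "\<dots> \<le> E0" unfolding E0_def by (rule lin_mono[OF eps AF less_imp_le[OF Kb0] Ab n])
    finally show ?thesis unfolding \<delta>_def by (simp add: algebra_simps)
  qed
  show ?thesis
  proof (rule harmonic_bound_not_summable[OF d0, of "max Kb c"])
    show "max Kb c > 0" using Kb0 by simp
    fix k
    have "\<delta> \<le> (Kb + c * real k) * measure P (G (k + i0))" using bnd[of "k + i0"] by simp
    also have "\<dots> \<le> max Kb c * real (Suc k) * measure P (G (k + i0))"
    proof (rule mult_right_mono)
      have "c * real k \<le> max Kb c * real k" by (intro mult_right_mono) auto
      then show "Kb + c * real k \<le> max Kb c * real (Suc k)" by (simp add: algebra_simps)
    qed simp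
    finally show "\<delta> \<le> max Kb c * real (Suc k) * measure P (G (k + i0))" .
  qed
qed

end

lemma space_state: "space state_space = UNIV"
  by (auto simp: state_space_def space_PiM PiE_def extensional_def)

lemma space_run: "space run_space = UNIV"
  by (auto simp: run_space_def space_PiM PiE_def extensional_def space_state)

lemma space_loop: "space (loop_space L) = UNIV"
  by (simp add: loop_space_def space_run)

lemma sets_loop: "sets (loop_space L) = sets run_space"
  by (simp add: loop_space_def)

lemma prob_loop: "prob_space (loop_space L)"
proof -
  have "prob_space (choice_space L)"
    unfolding choice_space_def by (rule prob_space_PiM) (rule prob_space_measure_pmf)
  then show ?thesis unfolding loop_space_def
    by (rule prob_space.prob_space_distr) (rule run_of_meas)
qed

definition gens :: "nat \<Rightarrow> (nat \<Rightarrow> nat \<Rightarrow> real) set set" where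
  "gens i = {{\<theta>. \<forall>k\<le>i. \<theta> k \<in> A k} | A. \<forall>k\<le>i. A k \<in> sets state_space}"

lemma lf_eq: "loop_filtration L i = sigma UNIV (gens i)"
  by (simp add: loop_filtration_def gens_def space_loop)

lemma space_lf: "space (loop_filtration L i) = UNIV"
  by (simp add: lf_eq)

lemma sets_lf: "sets (loop_filtration L i) = sigma_sets UNIV (gens i)"
  by (simp add: lf_eq sets_measure_of)

lemma comp_run_meas: "(\<lambda>\<theta>. \<theta> k) \<in> measurable run_space state_space"
  unfolding run_space_def by (rule measurable_component_singleton) simp

lemma gens_sets: "gens i \<subseteq> sets run_space"
proof
  fix S assume "S \<in> gens i"
  then obtain A where S: "S = {\<theta>. \<forall>k\<le>i. \<theta> k \<in> A k}" and A: "\<forall>k\<le>i. A k \<in> sets state_space"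
    unfolding gens_def by blast
  have "S = (\<Inter>k\<in>{..i}. (\<lambda>\<theta>. \<theta> k) -` A k \<inter> space run_space)"
    unfolding S space_run by auto
  also have "\<dots> \<in> sets run_space"
    using A by (intro sets.finite_INT) (auto intro: measurable_sets[OF comp_run_meas])
  finally show "S \<in> sets run_space" .
qed

lemma subalg_lf: "subalgebra (loop_space L) (loop_filtration L i)"
  unfolding subalgebra_def
proof
  show "sets (loop_filtration L i) \<subseteq> sets (loop_space L)"
    unfolding sets_lf sets_loop
    using sets.sigma_sets_subset[OF gens_sets] space_run by simp
  show "space (loop_filtration L i) = space (loop_space L)" by (simp add: space_lf space_loop)
qed

lemma gens_mono: "i \<le> j \<Longrightarrow> gens i \<subseteq> gens j"
proof
  fix S assume ij: "i \<le> j" and "S \<in> gens i"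
  then obtain A where S: "S = {\<theta>. \<forall>k\<le>i. \<theta> k \<in> A k}" and A: "\<forall>k\<le>i. A k \<in> sets state_space"
    unfolding gens_def by blast
  define A' where "A' = (\<lambda>k. if k \<le> i then A k else space state_space)"
  have "S = {\<theta>. \<forall>k\<le>j. \<theta> k \<in> A' k}" unfolding S A'_def using ij by (auto simp: space_state)
  moreover have "\<forall>k\<le>j. A' k \<in> sets state_space" using A unfolding A'_def by auto
  ultimately show "S \<in> gens j" unfolding gens_def by blast
qed

lemma lf_mono: "i \<le> j \<Longrightarrow> sets (loop_filtration L i) \<subseteq> sets (loop_filtration L j)"
  unfolding sets_lf by (rule sigma_sets_mono'[OF gens_mono])

lemma comp_lf_meas: "(\<lambda>\<theta>. \<theta> i) \<in> measurable (loop_filtration L i) state_space"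
proof (rule measurableI)
  show "\<theta> \<in> space (loop_filtration L i) \<Longrightarrow> \<theta> i \<in> space state_space" for \<theta>
    by (simp add: space_state)
  fix B assume B: "B \<in> sets state_space"
  define A where "A = (\<lambda>k. if k = i then B else space state_space)"
  have "(\<lambda>\<theta>. \<theta> i) -` B \<inter> space (loop_filtration L i) = {\<theta>. \<forall>k\<le>i. \<theta> k \<in> A k}"
    by (simp add: A_def space_lf space_state set_eq_iff)
  moreover have "{\<theta>. \<forall>k\<le>i. \<theta> k \<in> A k} \<in> gens i"
  proof -
    have "\<forall>k\<le>i. A k \<in> sets state_space" using B by (simp add: A_def)
    then show ?thesis unfolding gens_def by blast
  qed
  ultimately show "(\<lambda>\<theta>. \<theta> i) -` B \<inter> space (loop_filtration L i) \<in> sets (loop_filtration L i)"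
    unfolding sets_lf by auto
qed

lemma state_fun_meas:
  "(\<lambda>s. peval P s) \<in> borel_measurable state_space"
  by (rule peval_meas) (unfold state_space_def, rule measurable_component_singleton, simp)

lemma peval_lf_meas: "(\<lambda>\<theta>. peval P (\<theta> i)) \<in> borel_measurable (loop_filtration L i)"
  by (rule measurable_compose[OF comp_lf_meas state_fun_meas])

lemma peval_run_meas: "(\<lambda>\<theta>. peval P (\<theta> i)) \<in> borel_measurable run_space"
  by (rule measurable_compose[OF comp_run_meas state_fun_meas])

lemma guard_lf_sets: "{\<theta> \<in> space (loop_space L). guard_holds L (\<theta> i)} \<in> sets (loop_filtration L i)"
proof -
  have "{\<theta> \<in> space (loop_filtration L i). 0 < peval (guard_poly L) (\<theta> i)} \<in> sets (loop_filtration L i)"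
    by (rule borel_measurable_less[OF borel_measurable_const peval_lf_meas])
  then show ?thesis by (simp add: guard_holds_def space_lf space_loop)
qed

lemma coord_run_meas: "(\<lambda>\<theta>. \<theta> j k) \<in> borel_measurable run_space"
  using peval_run_meas[of "Var k" j] by simp

lemma frz_run: "AE \<theta> in loop_space L. \<not> guard_holds L (\<theta> i) \<longrightarrow> \<theta> (Suc i) = \<theta> i"
proof -
  have Q: "{\<theta> \<in> space run_space. \<theta> (Suc i) k = \<theta> i k} \<in> sets run_space" for k
    by (rule borel_measurable_eq[OF coord_run_meas coord_run_meas])
  have Gs: "{\<theta> \<in> space run_space. 0 < peval (guard_poly L) (\<theta> i)} \<in> sets run_space"
    by (rule borel_measurable_less[OF borel_measurable_const peval_run_meas])
  have "{\<theta> \<in> space run_space. 0 < peval (guard_poly L) (\<theta> i)} \<union> (\<Inter>k\<in>UNIV. {\<theta> \<in> space run_space. \<theta> (Suc i) k = \<theta> i k}) \<in> sets run_space"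
    using Gs Q by (intro sets.Un sets.countable_INT) auto
  moreover have "{\<theta> \<in> space run_space. \<not> guard_holds L (\<theta> i) \<longrightarrow> \<theta> (Suc i) = \<theta> i} =
     {\<theta> \<in> space run_space. 0 < peval (guard_poly L) (\<theta> i)} \<union> (\<Inter>k\<in>UNIV. {\<theta> \<in> space run_space. \<theta> (Suc i) k = \<theta> i k})"
    by (auto simp: guard_holds_def fun_eq_iff space_run)
  ultimately have S: "{\<theta> \<in> space run_space. \<not> guard_holds L (\<theta> i) \<longrightarrow> \<theta> (Suc i) = \<theta> i} \<in> sets run_space"
    by simp
  show ?thesis unfolding loop_space_def
    by (subst AE_distr_iff[OF run_of_meas S]) auto
qed

lemma freeze_forward:
  assumes fr: "\<forall>i. \<not> g (\<theta> i) \<longrightarrow> \<theta> (Suc i) = \<theta> i" and ng: "\<not> g (\<theta> j)" and jn: "j \<le> n"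
  shows "\<theta> n = \<theta> j"
  using jn
proof (induction n rule: dec_induct)
  case base then show ?case by simp
next
  case (step n)
  then have "\<not> g (\<theta> n)" using ng by simp
  then show ?case using fr step by simp
qed

lemma BF: "AE \<theta> in loop_space L. \<forall>n. guard_holds L (\<theta> n) \<longrightarrow> (\<forall>j\<le>n. guard_holds L (\<theta> j))"
proof -
  have "AE \<theta> in loop_space L. \<forall>i. \<not> guard_holds L (\<theta> i) \<longrightarrow> \<theta> (Suc i) = \<theta> i"
    by (subst AE_all_countable) (blast intro: frz_run)
  then show ?thesis
  proof eventually_elim
    case (elim \<theta>)
    show ?case
    proof (intro allI impI)
      fix n j assume gn: "guard_holds L (\<theta> n)" and jn: "j \<le> n"
      show "guard_holds L (\<theta> j)"
      proof (rule ccontr)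
        assume "\<not> guard_holds L (\<theta> j)"
        from freeze_forward[of "guard_holds L" \<theta>, OF elim this jn] gn \<open>\<not> guard_holds L (\<theta> j)\<close>
        show False by simp
      qed
    qed
  qed
qed

lemma sum_ind_le_T:
  fixes \<theta> :: "nat \<Rightarrow> nat \<Rightarrow> real"
  assumes bf: "\<forall>n. guard_holds L (\<theta> n) \<longrightarrow> (\<forall>j\<le>n. guard_holds L (\<theta> j))"
    and Gdef: "\<And>n. \<theta> \<in> G n \<longleftrightarrow> guard_holds L (\<theta> n)"
  shows "(\<Sum>n<N. indicator (G n) \<theta> :: ennreal) \<le> ennreal_of_enat (looping_time L \<theta>)"
proof (cases "\<exists>i. \<not> guard_holds L (\<theta> i)")
  case False
  then show ?thesis by (simp add: looping_time_def)
next
  case True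
  define m where "m = (LEAST i. \<not> guard_holds L (\<theta> i))"
  have T: "looping_time L \<theta> = enat m" using True by (simp add: looping_time_def m_def)
  have nm: "\<not> guard_holds L (\<theta> m)" unfolding m_def using True by (metis LeastI)
  have le: "indicator (G n) \<theta> \<le> (if n < m then 1 else (0::ennreal))" for n
  proof (cases "n < m")
    case False
    then have "\<theta> \<notin> G n" using bf nm Gdef by (meson not_less)
    then show ?thesis by simp
  qed (simp add: indicator_def)
  have "(\<Sum>n<N. indicator (G n) \<theta> :: ennreal) \<le> (\<Sum>n<N. if n < m then 1 else (0::ennreal))"
    by (rule sum_mono) (rule le)
  also have "\<dots> = (\<Sum>n\<in>{x \<in> {..<N}. x < m}. 1)"
    by (rule sum.inter_filter[symmetric]) simp
  also have "\<dots> = of_nat (card {x \<in> {..<N}. x < m})" by simp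
  also have "\<dots> \<le> of_nat m"
  proof -
    have "card {x \<in> {..<N}. x < m} \<le> card {..<m}" by (rule card_mono) auto
    then show ?thesis by simp
  qed
  finally show ?thesis using T by simp
qed

theorem mainTheorem2:
  fixes L :: ploop and I :: "(nat \<Rightarrow> real) \<Rightarrow> bool" and M :: mpoly
    and i0 :: nat and c \<epsilon> :: real
  assumes loop: "prob_solvable L"
    and inv: "pure_invariant L I"
    and Mvars: "pvars M \<subseteq> {..<nvars L}"
    and c_pos: "c > 0"
    and neg: "measure (loop_space L) {\<theta> \<in> space (loop_space L). peval M (\<theta> i0) < 0} > 0"
    and cond1: "\<And>i. i \<ge> i0 \<Longrightarrow> AE \<theta> in loop_space L.
                  \<not> guard_holds L (\<theta> i) \<and> I (\<theta> i) \<longrightarrow> peval M (\<theta> i) \<ge> 0"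
    and cond2: "\<And>i. i \<ge> i0 \<Longrightarrow> AE \<theta> in loop_space L.
                  guard_holds L (\<theta> i) \<and> I (\<theta> i) \<longrightarrow>
                  real_cond_exp (loop_space L) (loop_filtration L i)
                    (\<lambda>\<theta>. peval M (\<theta> (Suc i)) - peval M (\<theta> i)) \<theta> \<le> - \<epsilon>"
    and cond3: "\<And>i. i \<ge> i0 \<Longrightarrow> AE \<theta> in loop_space L.
                  \<bar>peval M (\<theta> (Suc i)) - peval M (\<theta> i)\<bar> < c"
  shows "(\<epsilon> > 0 \<longrightarrow> \<not> AST L) \<and> (\<epsilon> \<ge> 0 \<longrightarrow> \<not> PAST L)"
proof -
  define G where "G = (\<lambda>i. {\<theta> \<in> space (loop_space L). guard_holds L (\<theta> i)})"
  have AEinv: "AE \<theta> in loop_space L. I (\<theta> i)" for i using inv unfolding pure_invariant_def by blast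
  have Gmem: "\<theta> \<in> G n \<longleftrightarrow> guard_holds L (\<theta> n)" for \<theta> n by (simp add: G_def space_loop)
  have "absloop (loop_space L) (loop_filtration L) (\<lambda>i \<theta>. peval M (\<theta> i)) G i0 c \<epsilon>"
  proof (rule absloop.intro[OF prob_loop], rule absloop_axioms.intro)
    show "\<And>i. subalgebra (loop_space L) (loop_filtration L i)" by (rule subalg_lf)
    show "\<And>i j. i \<le> j \<Longrightarrow> sets (loop_filtration L i) \<subseteq> sets (loop_filtration L j)" by (rule lf_mono)
    show "\<And>i. (\<lambda>\<theta>. peval M (\<theta> i)) \<in> borel_measurable (loop_filtration L i)" by (rule peval_lf_meas)
    show "\<And>i. G i \<in> sets (loop_filtration L i)" unfolding G_def by (rule guard_lf_sets)
    show "\<And>i. AE x in loop_space L. x \<notin> G i \<longrightarrow> peval M (x (Suc i)) = peval M (x i)"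
      subgoal for i using frz_run[of L i] by eventually_elim (auto simp: Gmem)
      done
    show "\<And>i. i0 \<le> i \<Longrightarrow> AE x in loop_space L. x \<notin> G i \<longrightarrow> 0 \<le> peval M (x i)"
      subgoal premises p for i using cond1[OF p] AEinv[of i] by eventually_elim (auto simp: Gmem)
      done
    show "\<And>i. i0 \<le> i \<Longrightarrow> AE x in loop_space L. x \<in> G i \<longrightarrow>
               real_cond_exp (loop_space L) (loop_filtration L i) (\<lambda>x. peval M (x (Suc i)) - peval M (x i)) x \<le> - \<epsilon>"
      subgoal premises p for i using cond2[OF p] AEinv[of i] by eventually_elim (auto simp: Gmem)
      done
    show "\<And>i. i0 \<le> i \<Longrightarrow> AE x in loop_space L. \<bar>peval M (x (Suc i)) - peval M (x i)\<bar> < c"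
      by (rule cond3)
    show "0 < c" by (rule c_pos)
  qed
  then interpret A: absloop "loop_space L" "loop_filtration L" "\<lambda>i \<theta>. peval M (\<theta> i)" G i0 c \<epsilon> .
  have part1: "\<not> AST L" if eps: "\<epsilon> > 0"
  proof
    assume ast: "AST L"
    obtain \<delta> where d0: "\<delta> > 0" and dG: "\<And>n. n \<ge> i0 \<Longrightarrow> \<delta> \<le> measure (loop_space L) (G n)"
      using A.notAST_abs[OF eps neg] by blast
    define S where "S = (\<lambda>N. {\<theta> \<in> space (loop_space L). \<exists>i\<le>N. \<not> guard_holds L (\<theta> i)})"
    have S_eq: "S N = (\<Union>i\<in>{..N}. space (loop_space L) - G i)" for N
      by (auto simp: S_def Gmem space_loop)
    have Ssets: "S N \<in> sets (loop_space L)" for N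
      unfolding S_eq by (intro sets.finite_UN) auto
    have inc: "incseq S" unfolding incseq_def S_def by (auto intro: le_trans)
    have US: "(\<Union>N. S N) = {\<theta> \<in> space (loop_space L). looping_time L \<theta> < \<infinity>}"
      by (auto simp: S_def looping_time_def)
    have lim: "(\<lambda>N. measure (loop_space L) (S N)) \<longlonglongrightarrow> measure (loop_space L) (\<Union>N. S N)"
      by (rule A.finite_Lim_measure_incseq) (use Ssets inc in auto)
    have bnd: "measure (loop_space L) (S N) \<le> 1 - \<delta>" if N: "N \<ge> i0" for N
    proof -
      have "emeasure (loop_space L) (S N) \<le> emeasure (loop_space L) (space (loop_space L) - G N)"
      proof (rule emeasure_mono_AE)
        show "AE x in loop_space L. x \<in> S N \<longrightarrow> x \<in> space (loop_space L) - G N"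
          using BF[of L] by eventually_elim (auto simp: S_def Gmem)
      qed auto
      then have "measure (loop_space L) (S N) \<le> measure (loop_space L) (space (loop_space L) - G N)"
        by (simp add: A.emeasure_eq_measure)
      also have "\<dots> = 1 - measure (loop_space L) (G N)" by (rule A.prob_compl) simp
      finally show ?thesis using dG[OF N] by simp
    qed
    have "measure (loop_space L) (\<Union>N. S N) \<le> 1 - \<delta>"
      by (rule LIMSEQ_le_const2[OF lim]) (use bnd in blast)
    then show False using ast d0 US unfolding AST_def by simp
  qed
  have part2: "\<not> PAST L" if eps: "\<epsilon> \<ge> 0"
  proof
    assume past: "PAST L"
    have ns: "\<not> summable (\<lambda>n. measure (loop_space L) (G n))"
      using A.notPAST_abs[OF eps neg] .
    define r where "r = (\<integral>\<^sup>+ \<theta>. ennreal_of_enat (looping_time L \<theta>) \<partial>loop_space L)"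
    have rfin: "r < \<infinity>" using past unfolding PAST_def r_def .
    have partial: "(\<Sum>n<N. measure (loop_space L) (G n)) \<le> enn2real r" for N
    proof -
      have "ennreal (\<Sum>n<N. measure (loop_space L) (G n)) = (\<Sum>n<N. emeasure (loop_space L) (G n))"
        by (simp add: A.emeasure_eq_measure sum_ennreal)
      also have "\<dots> = (\<integral>\<^sup>+ \<theta>. (\<Sum>n<N. indicator (G n) \<theta>) \<partial>loop_space L)"
        by (subst nn_integral_sum) auto
      also have "\<dots> \<le> r"
      proof -
        have "AE \<theta> in loop_space L. (\<Sum>n<N. indicator (G n) \<theta>) \<le> ennreal_of_enat (looping_time L \<theta>)"
          using BF[of L] proof eventually_elim
          case (elim \<theta>)
          show ?case by (rule sum_ind_le_T[OF elim Gmem])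
        qed
        then show ?thesis unfolding r_def by (rule nn_integral_mono_AE)
      qed
      also have "\<dots> = ennreal (enn2real r)" using rfin by simp
      finally show ?thesis by (simp add: ennreal_le_iff)
    qed
    have "summable (\<lambda>n. measure (loop_space L) (G n))"
    proof (rule bounded_imp_summable)
      show "\<And>n. 0 \<le> measure (loop_space L) (G n)" by simp
      show "(\<Sum>k\<le>n. measure (loop_space L) (G k)) \<le> enn2real r" for n
        using partial[of "Suc n"] by (simp add: lessThan_Suc_atMost)
    qed
    then show False using ns by blast
  qed
  show ?thesis using part1 part2 by blast
qed

end
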